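(* Let $f,g$ satisfy the standing assumptions below and let $\beta>0$. If $(x,y)\in\mathcal{M}$ is a first-order stationary point of (CDB), then $(x,y)$ is a first-order stationary point of (BLO). Furthermore, when $f$ is Clarke regular, for any $(x,y)\in\mathcal{M}$, $(x,y)$ is a first-order stationary point of (BLO) if and only if it is a first-order stationary point of (CDB).
   Context: Standing assumptions. (A1) Constants $M_f,\mu,L_g,Q_g>0$ exist such that: $f:\mathbb{R}^n\times\mathbb{R}^p\to\mathbb{R}$ is $M_f$-Lipschitz; $g$ is twice differentiable with $\nabla^2_{yy}g\succeq\mu I_p$; $\nabla g$ is $L_g$-Lipschitz; $\nabla^2_{yy}g,\nabla^2_{xy}g$ are $Q_g$-Lipschitz; $\nabla^2_{yy}g$ is continuously differentiable ($\nabla^2_{xy}g\in\mathbb{R}^{n\times p}$ has entries $\partial^2g/\partial x_i\partial y_j$). (A2) $f$ is a potential function of a conservative field $\mathcal{D}_f$ with compact convex values of norm at most $M_f$. Notation: $\mathcal{A}(x,y):=y-\nabla^2_{yy}g(x,y)^{-1}\nabla_yg(x,y)$; $h(x,y):=f(x,\mathcal{A}(x,y))+\frac\beta2\|\nabla_yg(x,y)\|^2$; $\mathcal{M}:=\{(x,y):\nabla_yg(x,y)=0\}$; $\partial$ = Clarke subdifferential. A first-order stationary point of (CDB) is $(x,y)$ with $0\in\partial h(x,y)$. A first-order stationary point of (BLO) (the problem $\min f(x,y)$ s.t. $y=\arg\min_{y'}g(x,y')$) is $(x,y)$ for which there is $(d_x,d_y)\in\partial f(x,y)$ with $d_x-\nabla^2_{xy}g(x,y)\nabla^2_{yy}g(x,y)^{-1}d_y=0$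 and $\nabla_yg(x,y)=0$. *)

theory Defs
  imports "HOL-Analysis.Analysis"
begin

definition grad :: "('a::euclidean_space \<Rightarrow> real) \<Rightarrow> 'a \<Rightarrow> 'a" where
  "grad F z = (SOME v. (F has_derivative (\<lambda>h. v \<bullet> h)) (at z))"

definition hess :: "('a::euclidean_space \<Rightarrow> real) \<Rightarrow> 'a \<Rightarrow> 'a \<Rightarrow> 'a" where
  "hess F z = (SOME L. (grad F has_derivative L) (at z))"

definition grad_x :: "((real^'n) \<times> (real^'p) \<Rightarrow> real) \<Rightarrow> (real^'n) \<times> (real^'p) \<Rightarrow> real^'n" where
  "grad_x F z = fst (grad F z)"

definition grad_y :: "((real^'n) \<times> (real^'p) \<Rightarrow> real) \<Rightarrow> (real^'n) \<times> (real^'p) \<Rightarrow> real^'p" where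
  "grad_y F z = snd (grad F z)"

text \<open>hess_yy F z \$ i \$ j = d^2 F / dy_j dy_i\<close>
definition hess_yy :: "((real^'n) \<times> (real^'p) \<Rightarrow> real) \<Rightarrow> (real^'n) \<times> (real^'p) \<Rightarrow> real^'p^'p" where
  "hess_yy F z = (\<chi> i j. snd (hess F z (0, axis j 1)) $ i)"

text \<open>hess_xy F z \$ i \$ j = d^2 F / dx_i dy_j  (an n x p matrix)\<close>
definition hess_xy :: "((real^'n) \<times> (real^'p) \<Rightarrow> real) \<Rightarrow> (real^'n) \<times> (real^'p) \<Rightarrow> real^'p^'n" where
  "hess_xy F z = (\<chi> i j. snd (hess F z (axis i 1, 0)) $ j)"

definition clarke_dd :: "('a::real_normed_vector \<Rightarrow> real) \<Rightarrow> 'a \<Rightarrow> 'a \<Rightarrow> ereal" where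
  "clarke_dd F z v =
     Limsup (nhds z \<times>\<^sub>F at_right (0::real)) (\<lambda>(w, t). ereal ((F (w + t *\<^sub>R v) - F w) / t))"

definition clarke_subdiff :: "('a::real_inner \<Rightarrow> real) \<Rightarrow> 'a \<Rightarrow> 'a set" where
  "clarke_subdiff F z = {\<xi>. \<forall>v. ereal (\<xi> \<bullet> v) \<le> clarke_dd F z v}"

definition clarke_regular_at :: "('a::real_normed_vector \<Rightarrow> real) \<Rightarrow> 'a \<Rightarrow> bool" where
  "clarke_regular_at F z \<longleftrightarrow>
     (\<forall>v. \<exists>d. ((\<lambda>t. (F (z + t *\<^sub>R v) - F z) / t) \<longlongrightarrow> d) (at_right 0)
              \<and> clarke_dd F z v = ereal d)"

definition clarke_regular :: "('a::real_normed_vector \<Rightarrow> real) \<Rightarrow> bool" where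
  "clarke_regular F \<longleftrightarrow> (\<forall>z. clarke_regular_at F z)"

definition abs_cont_curve :: "(real \<Rightarrow> 'a::real_normed_vector) \<Rightarrow> bool" where
  "abs_cont_curve \<gamma> \<longleftrightarrow>
     (\<forall>\<epsilon>>0. \<exists>\<delta>>0. \<forall>(m::nat) a b.
        (\<forall>i<m. 0 \<le> a i \<and> a i \<le> b i \<and> b i \<le> 1) \<and>
        (\<forall>i<m. \<forall>j<m. i \<noteq> j \<longrightarrow> b i \<le> a j \<or> b j \<le> a i) \<and>
        (\<Sum>i<m. b i - a i) < \<delta>
        \<longrightarrow> (\<Sum>i<m. norm (\<gamma> (b i) - \<gamma> (a i))) < \<epsilon>)"

text \<open>Conservative field D with potential F (Bolte--Pauwels): closed graph,
  nonempty compact values, and the integral formula along every absolutely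
  continuous curve.\<close>

definition conservative_potential ::
    "('a::euclidean_space \<Rightarrow> 'a set) \<Rightarrow> ('a \<Rightarrow> real) \<Rightarrow> bool" where
  "conservative_potential D F \<longleftrightarrow>
     closed {(z, v). v \<in> D z} \<and>
     (\<forall>z. D z \<noteq> {} \<and> compact (D z)) \<and>
     (\<forall>\<gamma>. abs_cont_curve \<gamma> \<longrightarrow>
        ((\<lambda>t. Sup ((\<lambda>v. vector_derivative \<gamma> (at t) \<bullet> v) ` D (\<gamma> t)))
           has_integral (F (\<gamma> 1) - F (\<gamma> 0))) {0..1})"

definition A_map :: "((real^'n) \<times> (real^'p) \<Rightarrow> real) \<Rightarrow> (real^'n) \<times> (real^'p) \<Rightarrow> real^'p" where
  "A_map g z = snd z - matrix_inv (hess_yy g z) *v grad_y g z"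

definition h_fun :: "((real^'n) \<times> (real^'p) \<Rightarrow> real) \<Rightarrow> ((real^'n) \<times> (real^'p) \<Rightarrow> real) \<Rightarrow> real
                       \<Rightarrow> (real^'n) \<times> (real^'p) \<Rightarrow> real" where
  "h_fun f g \<beta> z = f (fst z, A_map g z) + \<beta> / 2 * (norm (grad_y g z))\<^sup>2"

definition M_set :: "((real^'n) \<times> (real^'p) \<Rightarrow> real) \<Rightarrow> ((real^'n) \<times> (real^'p)) set" where
  "M_set g = {z. grad_y g z = 0}"

definition CDB_stationary where
  "CDB_stationary f g \<beta> z \<longleftrightarrow> 0 \<in> clarke_subdiff (h_fun f g \<beta>) z"

definition BLO_stationary ::
    "((real^'n) \<times> (real^'p) \<Rightarrow> real) \<Rightarrow> ((real^'n) \<times> (real^'p) \<Rightarrow> real) \<Rightarrow> (real^'n) \<times> (real^'p) \<Rightarrow> bool" where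
  "BLO_stationary f g z \<longleftrightarrow>
     (\<exists>d \<in> clarke_subdiff f z.
        fst d - hess_xy g z *v (matrix_inv (hess_yy g z) *v snd d) = 0) \<and>
     grad_y g z = 0"

end

theory Submission
  imports Defs
begin


lemma Limsup_le_by_real:
  fixes X :: "'b \<Rightarrow> ereal"
  assumes "\<And>r. Y < ereal r \<Longrightarrow> eventually (\<lambda>x. X x < ereal r) F"
  shows "Limsup F X \<le> Y"
proof (rule ccontr)
  assume "\<not> Limsup F X \<le> Y"
  then have "Y < Limsup F X" by simp
  then obtain r where r: "Y < ereal r" "ereal r < Limsup F X" using ereal_dense2 by blast
  have "eventually (\<lambda>x. X x \<le> ereal r) F" using assms[OF r(1)] by (auto elim: eventually_mono)
  then have "Limsup F X \<le> ereal r" by (rule Limsup_bounded)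
  with r(2) show False by simp
qed

lemma CF_nontriv: "nhds (z::'a::real_normed_vector) \<times>\<^sub>F at_right (0::real) \<noteq> bot"
  by (simp add: prod_filter_eq_bot)

lemma transfer_ev:
  assumes "filterlim k F F" "eventually P F"
  shows "eventually (\<lambda>x. P (k x)) F"
  using assms filterlim_iff by blast

lemma CF_shift:
  fixes z a :: "'a::real_normed_vector" and c :: real
  assumes "c > 0"
  shows "filterlim (\<lambda>x. (fst x + snd x *\<^sub>R a, c * snd x)) (nhds z \<times>\<^sub>F at_right 0) (nhds z \<times>\<^sub>F at_right 0)"
proof (rule filterlim_Pair)
  have f: "(fst \<longlongrightarrow> z) (nhds z \<times>\<^sub>F at_right (0::real))"
    using filterlim_fst[of "nhds z" "at_right (0::real)"] by (simp add: filterlim_def)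
  have s0: "filterlim snd (at_right (0::real)) (nhds z \<times>\<^sub>F at_right (0::real))" by (rule filterlim_snd)
  then have s: "(snd \<longlongrightarrow> (0::real)) (nhds z \<times>\<^sub>F at_right (0::real))"
    by (metis filterlim_at)
  show "((\<lambda>x. fst x + snd x *\<^sub>R a) \<longlongrightarrow> z) (nhds z \<times>\<^sub>F at_right 0)"
    using tendsto_add[OF f tendsto_scaleR[OF s tendsto_const[of a]]] by simp
  have ev: "eventually (\<lambda>x. snd x \<in> {0::real<..} \<and> snd x \<noteq> 0) (nhds z \<times>\<^sub>F at_right (0::real))"
    using s0 by (simp add: filterlim_at)
  show "LIM x nhds z \<times>\<^sub>F at_right 0. c * snd x :> at_right 0"
    unfolding filterlim_at
    using ev assms tendsto_mult_right_zero[OF s, of c] by (auto elim!: eventually_mono)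
qed

definition cq :: "('a::real_normed_vector \<Rightarrow> real) \<Rightarrow> 'a \<Rightarrow> 'a \<times> real \<Rightarrow> real" where
  "cq F v x = (F (fst x + snd x *\<^sub>R v) - F (fst x)) / snd x"

lemma clarke_dd_cq: "clarke_dd F z v = Limsup (nhds z \<times>\<^sub>F at_right 0) (\<lambda>x. ereal (cq F v x))"
  proof -
  have "(\<lambda>(w, t). ereal ((F (w + t *\<^sub>R v) - F w) / t)) = (\<lambda>x. ereal (cq F v x))"
    by (auto simp: fun_eq_iff cq_def)
  then show ?thesis unfolding clarke_dd_def by simp
qed

lemma ev_pos: "eventually (\<lambda>x. snd x > (0::real)) (nhds (z::'a::real_normed_vector) \<times>\<^sub>F at_right 0)"
proof -
  have "filterlim snd (at_right (0::real)) (nhds z \<times>\<^sub>F at_right (0::real))" by (rule filterlim_snd)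
  then show ?thesis by (auto simp: filterlim_at elim: eventually_mono)
qed

lemma cq_bound:
  assumes "M-lipschitz_on UNIV F" "snd x > 0"
  shows "\<bar>cq F v x\<bar> \<le> M * norm v"
proof -
  have "\<bar>F (fst x + snd x *\<^sub>R v) - F (fst x)\<bar> \<le> M * (snd x * norm v)"
    using lipschitz_onD[OF assms(1), of "fst x + snd x *\<^sub>R v" "fst x"] assms(2)
    by (simp add: dist_norm dist_real_def)
  then show ?thesis using assms(2) unfolding cq_def
    by (simp add: abs_div pos_divide_le_eq mult_ac)
qed

lemma cq_lip:
  assumes "M-lipschitz_on UNIV F" "snd x > 0"
  shows "cq F a x \<le> cq F b x + M * norm (a - b)"
proof -
  have "\<bar>F (fst x + snd x *\<^sub>R a) - F (fst x + snd x *\<^sub>R b)\<bar> \<le> M * (snd x * norm (a - b))"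
    using lipschitz_onD[OF assms(1), of "fst x + snd x *\<^sub>R a" "fst x + snd x *\<^sub>R b"] assms(2)
    by (simp add: dist_norm dist_real_def scaleR_diff_right[symmetric])
  then have "(F (fst x + snd x *\<^sub>R a) - F (fst x))/snd x \<le> (F (fst x + snd x *\<^sub>R b) - F (fst x))/snd x + M * norm (a - b)"
    using assms(2) by (simp add: field_simps abs_le_iff)
  then show ?thesis unfolding cq_def .
qed

definition cdr :: "('a::real_normed_vector \<Rightarrow> real) \<Rightarrow> 'a \<Rightarrow> 'a \<Rightarrow> real" where
  "cdr F z v = real_of_ereal (clarke_dd F z v)"

lemma clarke_dd_real:
  assumes "M-lipschitz_on UNIV F"
  shows "clarke_dd F z v = ereal (cdr F z v)" "\<bar>cdr F z v\<bar> \<le> M * norm v"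
proof -
  have ev: "eventually (\<lambda>x. \<bar>cq F v x\<bar> \<le> M * norm v) (nhds z \<times>\<^sub>F at_right 0)"
    using ev_pos[of z] by (auto elim!: eventually_mono intro: cq_bound[OF assms])
  have up: "clarke_dd F z v \<le> ereal (M * norm v)"
    unfolding clarke_dd_cq by (rule Limsup_bounded) (use ev in \<open>auto elim!: eventually_mono\<close>)
  have lo: "ereal (- (M * norm v)) \<le> clarke_dd F z v"
    unfolding clarke_dd_cq by (rule le_Limsup[OF CF_nontriv]) (use ev in \<open>auto elim!: eventually_mono\<close>)
  from up lo obtain r where r: "clarke_dd F z v = ereal r"
    by (cases "clarke_dd F z v") auto
  then show "clarke_dd F z v = ereal (cdr F z v)" unfolding cdr_def by simp
  show "\<bar>cdr F z v\<bar> \<le> M * norm v" using up lo r unfolding cdr_def by simp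
qed

lemma cdr_lip:
  assumes L: "M-lipschitz_on UNIV F"
  shows "cdr F z a \<le> cdr F z b + M * norm (a - b)"
proof -
  have "clarke_dd F z a \<le> ereal (cdr F z b + M * norm (a - b))"
    unfolding clarke_dd_cq
  proof (rule Limsup_le_by_real)
    fix r assume "ereal (cdr F z b + M * norm (a - b)) < ereal r"
    then have "clarke_dd F z b < ereal (r - M * norm (a - b))"
      using clarke_dd_real(1)[OF L] by simp
    then have "eventually (\<lambda>x. ereal (cq F b x) < ereal (r - M * norm (a - b))) (nhds z \<times>\<^sub>F at_right 0)"
      unfolding clarke_dd_cq by (rule Limsup_lessD)
    then show "eventually (\<lambda>x. ereal (cq F a x) < ereal r) (nhds z \<times>\<^sub>F at_right 0)"
      using ev_pos[of z]
    proof eventually_elim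
      case (elim x)
      then show ?case using cq_lip[OF L elim(2), of a b] by simp
    qed
  qed
  then show ?thesis using clarke_dd_real(1)[OF L] by simp
qed

lemma cdr_zero:
  assumes L: "M-lipschitz_on UNIV F"
  shows "cdr F z 0 = 0"
proof -
  have "clarke_dd F z 0 = 0"
    unfolding clarke_dd_cq cq_def using Limsup_const[OF CF_nontriv, of z "0::ereal"]
    by (simp add: zero_ereal_def)
  then show ?thesis unfolding cdr_def by simp
qed

lemma cdr_hom:
  assumes L: "M-lipschitz_on UNIV F" and c: "c \<ge> 0"
  shows "cdr F z (c *\<^sub>R a) \<le> c * cdr F z a"
proof (cases "c = 0")
  case True then show ?thesis using cdr_zero[OF L] by simp
next
  case False
  then have c: "c > 0" using c by simp
  have "clarke_dd F z (c *\<^sub>R a) \<le> ereal (c * cdr F z a)"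
    unfolding clarke_dd_cq
  proof (rule Limsup_le_by_real)
    fix r assume "ereal (c * cdr F z a) < ereal r"
    then have "clarke_dd F z a < ereal (r / c)"
      using clarke_dd_real(1)[OF L] c by (simp add: field_simps)
    then have "eventually (\<lambda>x. ereal (cq F a x) < ereal (r / c)) (nhds z \<times>\<^sub>F at_right 0)"
      unfolding clarke_dd_cq by (rule Limsup_lessD)
    from transfer_ev[OF CF_shift[OF c, where z=z and a=0] this]
    have "eventually (\<lambda>x. cq F a (fst x, c * snd x) < r / c) (nhds z \<times>\<^sub>F at_right 0)" by simp
    then show "eventually (\<lambda>x. ereal (cq F (c *\<^sub>R a) x) < ereal r) (nhds z \<times>\<^sub>F at_right 0)"
      using ev_pos[of z]
    proof eventually_elim
      case (elim x)
      have "cq F (c *\<^sub>R a) x = c * cq F a (fst x, c * snd x)"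
        unfolding cq_def using c elim(2) by (simp add: field_simps)
      then show ?case using elim(1) c by (simp add: field_simps)
    qed
  qed
  then show ?thesis using clarke_dd_real(1)[OF L] by simp
qed

lemma cdr_add:
  assumes L: "M-lipschitz_on UNIV F"
  shows "cdr F z (a + b) \<le> cdr F z a + cdr F z b"
proof -
  have "clarke_dd F z (a + b) \<le> ereal (cdr F z a + cdr F z b)"
    unfolding clarke_dd_cq
  proof (rule Limsup_le_by_real)
    fix r assume "ereal (cdr F z a + cdr F z b) < ereal r"
    define e where "e = (r - cdr F z a - cdr F z b) / 2"
    have e: "e > 0" using \<open>ereal (cdr F z a + cdr F z b) < ereal r\<close> by (simp add: e_def)
    have "clarke_dd F z a < ereal (cdr F z a + e)"
      using clarke_dd_real(1)[OF L] e by auto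
    then have 1: "eventually (\<lambda>x. ereal (cq F a x) < ereal (cdr F z a + e)) (nhds z \<times>\<^sub>F at_right 0)"
      unfolding clarke_dd_cq by (rule Limsup_lessD)
    have "clarke_dd F z b < ereal (cdr F z b + e)"
      using clarke_dd_real(1)[OF L] e by auto
    then have 2: "eventually (\<lambda>x. ereal (cq F b x) < ereal (cdr F z b + e)) (nhds z \<times>\<^sub>F at_right 0)"
      unfolding clarke_dd_cq by (rule Limsup_lessD)
    from transfer_ev[OF CF_shift[where c=1 and z=z and a=a, simplified] 2]
    have 3: "eventually (\<lambda>x. cq F b (fst x + snd x *\<^sub>R a, snd x) < cdr F z b + e) (nhds z \<times>\<^sub>F at_right 0)" by simp
    show "eventually (\<lambda>x. ereal (cq F (a + b) x) < ereal r) (nhds z \<times>\<^sub>F at_right 0)"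
      using ev_pos[of z] 1 3
    proof eventually_elim
      case (elim x)
      have "cq F (a + b) x = cq F a x + cq F b (fst x + snd x *\<^sub>R a, snd x)"
        unfolding cq_def using elim(1) by (simp add: field_simps scaleR_add_right add.assoc)
      moreover have "cq F a x + cq F b (fst x + snd x *\<^sub>R a, snd x) < r"
      proof -
        have "2 * e = r - cdr F z a - cdr F z b" unfolding e_def by simp
        moreover have "cq F a x < cdr F z a + e" using elim(2) by simp
        ultimately show ?thesis using elim(3) by linarith
      qed
      ultimately show ?case by simp
    qed
  qed
  then show ?thesis using clarke_dd_real(1)[OF L] by simp
qed

lemma cdr_convex:
  assumes L: "M-lipschitz_on UNIV F" and "u \<ge> 0" "v \<ge> 0" "u + v = 1"
  shows "cdr F z (u *\<^sub>R a + v *\<^sub>R b) \<le> u * cdr F z a + v * cdr F z b"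
  using cdr_add[OF L, of z "u *\<^sub>R a" "v *\<^sub>R b"] cdr_hom[OF L, of u z a] cdr_hom[OF L, of v z b] assms
  by linarith

lemma clarke_sep:
  fixes F :: "'a::euclidean_space \<Rightarrow> real" and L :: "'b::real_vector \<Rightarrow> 'a"
  assumes Lip: "M-lipschitz_on UNIV F" and lin: "linear L" and nn: "\<And>u. 0 \<le> cdr F z (L u)"
  shows "\<exists>\<xi> \<in> clarke_subdiff F z. \<forall>u. \<xi> \<bullet> L u = 0"
proof -
  define S where "S = {(L u, s) | u s. s \<le> (0::real)}"
  define K where "K = {(w, t) | w t. cdr F z w < t}"
  have cS: "convex S" unfolding convex_def S_def
  proof (safe)
    fix u1 u2 and s1 s2 p q :: real
    assume "s1 \<le> 0" "s2 \<le> 0" "0 \<le> p" "0 \<le> q" "p + q = 1"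
    then show "\<exists>u s. p *\<^sub>R (L u1, s1) + q *\<^sub>R (L u2, s2) = (L u, s) \<and> s \<le> 0"
      by (intro exI[of _ "p *\<^sub>R u1 + q *\<^sub>R u2"] exI[of _ "p * s1 + q * s2"])
         (auto simp: linear_add[OF lin] linear_scale[OF lin] add_nonpos_nonpos mult_nonneg_nonpos)
  qed
  have cK: "convex K" unfolding convex_def K_def
  proof (safe)
    fix w1 w2 and t1 t2 p q :: real
    assume a: "cdr F z w1 < t1" "cdr F z w2 < t2" "0 \<le> p" "0 \<le> q" "p + q = 1"
    have cv: "cdr F z (p *\<^sub>R w1 + q *\<^sub>R w2) \<le> p * cdr F z w1 + q * cdr F z w2"
      using cdr_convex[OF Lip] a by blast
    have "p * cdr F z w1 + q * cdr F z w2 < p * t1 + q * t2"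
    proof (cases "p = 0")
      case True then show ?thesis using a by simp
    next
      case False then have "p * cdr F z w1 < p * t1" using a by simp
      moreover have "q * cdr F z w2 \<le> q * t2" using a by (intro mult_left_mono) auto
      ultimately show ?thesis by simp
    qed
    then show "\<exists>w t. p *\<^sub>R (w1, t1) + q *\<^sub>R (w2, t2) = (w, t) \<and> cdr F z w < t"
      using cv by auto
  qed
  have S0: "(0, 0) \<in> S" unfolding S_def using linear_0[OF lin] by force
  have K0: "(0, 1) \<in> K" unfolding K_def using cdr_zero[OF Lip, of z] by force
  have SK: "S \<inter> K = {}"
  proof -
    have False if "x \<in> S" "x \<in> K" for x
    proof -
      from that(1) obtain u s where x: "x = (L u, s)" "s \<le> 0" unfolding S_def by blast
      from that(2) have "cdr F z (fst x) < snd x" unfolding K_def by auto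
      then show False using x nn[of u] by simp
    qed
    then show ?thesis by blast
  qed
  obtain a b where ab: "a \<noteq> 0" "\<forall>x\<in>S. a \<bullet> x \<le> b" "\<forall>x\<in>K. a \<bullet> x \<ge> b"
    using separating_hyperplane_sets[OF cS cK _ _ SK] S0 K0 by blast
  obtain a1 c where a: "a = (a1, c)" by (cases a)
  have b0: "0 \<le> b"
  proof -
    have "a \<bullet> (0, 0) \<le> b" using ab(2) S0 by blast
    then show ?thesis by (simp add: a)
  qed
  have aL: "a1 \<bullet> L u = 0" for u
  proof (rule ccontr)
    assume ne: "a1 \<bullet> L u \<noteq> 0"
    define l where "l = (b + 1) / (a1 \<bullet> L u)"
    have "(L (l *\<^sub>R u), 0) \<in> S" unfolding S_def by force
    then have "a1 \<bullet> L (l *\<^sub>R u) \<le> b" using ab(2) a by force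
    then have "l * (a1 \<bullet> L u) \<le> b" by (simp add: linear_scale[OF lin])
    then show False using ne by (simp add: l_def)
  qed
  have c0: "c \<ge> 0"
  proof (rule ccontr)
    assume "\<not> c \<ge> 0"
    then have cn: "c < 0" by simp
    have "(L 0, (b + 1) / c) \<in> S" unfolding S_def using cn b0
      by (auto intro!: exI[of _ 0] simp: divide_nonneg_neg)
    then have "a \<bullet> (L 0, (b + 1) / c) \<le> b" using ab(2) by blast
    then have "c * ((b + 1) / c) \<le> b" using a aL[of 0] by simp
    then show False using cn by simp
  qed
  have Kb: "b \<le> a1 \<bullet> w + c * t" if "cdr F z w < t" for w t
    using ab(3) a that unfolding K_def by force
  have cpos: "c > 0"
  proof (rule ccontr)
    assume "\<not> c > 0" then have "c = 0" using c0 by simp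
    then have "b \<le> a1 \<bullet> (- a1)" using Kb[of "- a1" "cdr F z (- a1) + 1"] by simp
    then have "a1 \<bullet> a1 \<le> 0" using b0 by simp
    then have "a1 = 0" by (metis inner_gt_zero_iff not_le)
    then show False using ab(1) a \<open>c = 0\<close> by (simp add: zero_prod_def)
  qed
  define \<xi> where "\<xi> = (- 1 / c) *\<^sub>R a1"
  have xi: "\<xi> \<bullet> w \<le> cdr F z w" for w
  proof (rule ccontr)
    assume "\<not> \<xi> \<bullet> w \<le> cdr F z w"
    then have lt: "cdr F z w < \<xi> \<bullet> w" by simp
    define t where "t = (\<xi> \<bullet> w + cdr F z w) / 2"
    have "cdr F z w < t" using lt by (simp add: t_def)
    then have "b \<le> a1 \<bullet> w + c * t" by (rule Kb)
    moreover have "a1 \<bullet> w = - c * (\<xi> \<bullet> w)" using cpos by (simp add: \<xi>_def)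
    moreover have "t < \<xi> \<bullet> w" using lt by (simp add: t_def)
    moreover have "c * t < c * (\<xi> \<bullet> w)" using calculation(3) cpos by simp
    ultimately have "b < 0" by simp
    then show False using b0 by simp
  qed
  have "\<xi> \<in> clarke_subdiff F z"
    unfolding clarke_subdiff_def using xi clarke_dd_real(1)[OF Lip] by simp
  moreover have "\<forall>u. \<xi> \<bullet> L u = 0" using aL by (simp add: \<xi>_def)
  ultimately show ?thesis by blast
qed

lemma ev_small:
  assumes "(d::real) > 0"
  shows "eventually (\<lambda>x. dist (fst x) z < d \<and> 0 < snd x \<and> snd x < d) (nhds (z::'a::metric_space) \<times>\<^sub>F at_right 0)"
proof -
  have 1: "eventually (\<lambda>w. dist w z < d) (nhds z)" using assms eventually_nhds_metric by blast
  have 2: "eventually (\<lambda>t. 0 < t \<and> t < d) (at_right (0::real))"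
    unfolding eventually_at_right_field using assms by blast
  show ?thesis unfolding eventually_prod_filter
    by (rule exI[of _ "\<lambda>w. dist w z < d"], rule exI[of _ "\<lambda>t. 0 < t \<and> t < d"]) (use 1 2 in auto)
qed




lemma clarke_chain_upper:
  fixes F :: "'a::real_normed_vector \<Rightarrow> real" and \<Phi> :: "'b::real_normed_vector \<Rightarrow> 'a"
    and q :: "'b \<Rightarrow> real"
  assumes Lip: "M-lipschitz_on UNIV F" and M: "M \<ge> 0" and cont: "isCont \<Phi> z"
    and strict: "\<And>e. e > 0 \<Longrightarrow> \<exists>d>0. \<forall>w t. dist w z < d \<longrightarrow> 0 < t \<longrightarrow> t < d \<longrightarrow>
                    norm (\<Phi> (w + t *\<^sub>R v) - \<Phi> w - t *\<^sub>R u) \<le> e * t"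
    and qs: "\<And>e. e > 0 \<Longrightarrow> \<exists>d>0. \<forall>w t. dist w z < d \<longrightarrow> 0 < t \<longrightarrow> t < d \<longrightarrow>
                    \<bar>q (w + t *\<^sub>R v) - q w\<bar> \<le> e * t"
  shows "clarke_dd (\<lambda>w. F (\<Phi> w) + q w) z v \<le> clarke_dd F (\<Phi> z) u"
  unfolding clarke_dd_cq[of "\<lambda>w. F (\<Phi> w) + q w"]
proof (rule Limsup_le_by_real)
  fix r assume r: "clarke_dd F (\<Phi> z) u < ereal r"
  define C where "C = cdr F (\<Phi> z) u"
  have CC: "clarke_dd F (\<Phi> z) u = ereal C" unfolding C_def using clarke_dd_real(1)[OF Lip] .
  define e where "e = (r - C) / 2"
  have e: "e > 0" using r CC by (simp add: e_def)
  have "clarke_dd F (\<Phi> z) u < ereal (C + e)" using CC e by simp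
  then have 1: "eventually (\<lambda>x. ereal (cq F u x) < ereal (C + e)) (nhds (\<Phi> z) \<times>\<^sub>F at_right 0)"
    unfolding clarke_dd_cq by (rule Limsup_lessD)
  have fl: "filterlim (\<lambda>x. (\<Phi> (fst x), snd x)) (nhds (\<Phi> z) \<times>\<^sub>F at_right (0::real)) (nhds z \<times>\<^sub>F at_right (0::real))"
  proof (rule filterlim_Pair)
    have "(fst \<longlongrightarrow> z) (nhds z \<times>\<^sub>F at_right (0::real))"
      using filterlim_fst[of "nhds z" "at_right (0::real)"] by (simp add: filterlim_def)
    from isCont_tendsto_compose[OF cont this]
    show "((\<lambda>x. \<Phi> (fst x)) \<longlongrightarrow> \<Phi> z) (nhds z \<times>\<^sub>F at_right (0::real))" .
    show "filterlim snd (at_right (0::real)) (nhds z \<times>\<^sub>F at_right (0::real))" by (rule filterlim_snd)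
  qed
  have 2: "eventually (\<lambda>x. cq F u (\<Phi> (fst x), snd x) < C + e) (nhds z \<times>\<^sub>F at_right 0)"
    using fl[unfolded filterlim_iff, rule_format, OF 1] by simp
  define e1 where "e1 = e / (2 * (M + 1))"
  have e1: "e1 > 0" using e M by (simp add: e1_def)
  obtain d1 where d1: "d1 > 0" "\<And>w t. dist w z < d1 \<Longrightarrow> 0 < t \<Longrightarrow> t < d1 \<Longrightarrow>
                    norm (\<Phi> (w + t *\<^sub>R v) - \<Phi> w - t *\<^sub>R u) \<le> e1 * t"
    using strict[OF e1] by blast
  obtain d2 where d2: "d2 > 0" "\<And>w t. dist w z < d2 \<Longrightarrow> 0 < t \<Longrightarrow> t < d2 \<Longrightarrow>
                    \<bar>q (w + t *\<^sub>R v) - q w\<bar> \<le> e1 * t"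
    using qs[OF e1] by blast
  have 3: "eventually (\<lambda>x. dist (fst x) z < min d1 d2 \<and> 0 < snd x \<and> snd x < min d1 d2) (nhds z \<times>\<^sub>F at_right 0)"
    by (rule ev_small) (use d1 d2 in simp)
  show "eventually (\<lambda>x. ereal (cq (\<lambda>w. F (\<Phi> w) + q w) v x) < ereal r) (nhds z \<times>\<^sub>F at_right 0)"
    using 2 3
  proof eventually_elim
    case (elim x)
    define w t where "w = fst x" "t = snd x"
    have t: "0 < t" "t < d1" "t < d2" "dist w z < d1" "dist w z < d2" using elim(2) by (auto simp: w_t_def)
    have A: "\<bar>F (\<Phi> (w + t *\<^sub>R v)) - F (\<Phi> w + t *\<^sub>R u)\<bar> \<le> M * (e1 * t)"
    proof -
      have "\<bar>F (\<Phi> (w + t *\<^sub>R v)) - F (\<Phi> w + t *\<^sub>R u)\<bar> \<le> M * norm (\<Phi> (w + t *\<^sub>R v) - (\<Phi> w + t *\<^sub>R u))"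
        using lipschitz_onD[OF Lip, of "\<Phi> (w + t *\<^sub>R v)" "\<Phi> w + t *\<^sub>R u"] by (simp add: dist_norm dist_real_def)
      also have "\<dots> \<le> M * (e1 * t)"
      proof -
        have n: "norm (\<Phi> (w + t *\<^sub>R v) - (\<Phi> w + t *\<^sub>R u)) \<le> e1 * t"
          using d1(2)[OF t(4) t(1) t(2)] by (simp add: diff_diff_eq)
        show ?thesis by (rule mult_left_mono[OF n M])
      qed
      finally show ?thesis .
    qed
    have B: "\<bar>q (w + t *\<^sub>R v) - q w\<bar> \<le> e1 * t" using d2(2)[OF t(5) t(1) t(3)] .
    have eq: "cq (\<lambda>w. F (\<Phi> w) + q w) v x = cq F u (\<Phi> w, t)
        + (F (\<Phi> (w + t *\<^sub>R v)) - F (\<Phi> w + t *\<^sub>R u)) / t + (q (w + t *\<^sub>R v) - q w) / t"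
    proof -
      have x: "x = (w, t)" by (simp add: w_t_def)
      show ?thesis unfolding cq_def x fst_conv snd_conv using t(1)
        by (simp add: add_divide_distrib[symmetric] diff_divide_distrib[symmetric])
    qed
    have "(F (\<Phi> (w + t *\<^sub>R v)) - F (\<Phi> w + t *\<^sub>R u)) / t \<le> M * e1"
      unfolding pos_divide_le_eq[OF t(1)] using A by (simp add: abs_le_iff mult.assoc)
    moreover have "(q (w + t *\<^sub>R v) - q w) / t \<le> e1"
      unfolding pos_divide_le_eq[OF t(1)] using B by (simp add: abs_le_iff)
    moreover have "M * e1 + e1 < e"
    proof -
      have "M * e1 + e1 = (M + 1) * e1" by (simp add: algebra_simps)
      also have "\<dots> = e / 2" unfolding e1_def using M by (simp add: field_simps)
      finally show ?thesis using e by simp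
    qed
    moreover have "cq F u (\<Phi> w, t) < C + e" using elim(1) by (simp add: w_t_def)
    moreover have "C + 2 * e = r" unfolding e_def by (simp add: field_simps)
    ultimately have "cq (\<lambda>w. F (\<Phi> w) + q w) v x < r" unfolding eq by linarith
    then show ?case by simp
  qed
qed



lemma clarke_chain_lower:
  fixes F :: "'a::real_normed_vector \<Rightarrow> real" and \<Phi> :: "'b::real_normed_vector \<Rightarrow> 'a"
    and q :: "'b \<Rightarrow> real"
  assumes Lip: "M-lipschitz_on UNIV F" and M: "M \<ge> 0" and reg: "clarke_regular_at F (\<Phi> z)"
    and line: "\<And>e. e > 0 \<Longrightarrow> \<exists>d>0. \<forall>t. 0 < t \<longrightarrow> t < d \<longrightarrow>
                    norm (\<Phi> (z + t *\<^sub>R v) - \<Phi> z - t *\<^sub>R u) \<le> e * t"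
    and ql: "\<And>e. e > 0 \<Longrightarrow> \<exists>d>0. \<forall>t. 0 < t \<longrightarrow> t < d \<longrightarrow>
                    \<bar>q (z + t *\<^sub>R v) - q z\<bar> \<le> e * t"
  shows "clarke_dd F (\<Phi> z) u \<le> clarke_dd (\<lambda>w. F (\<Phi> w) + q w) z v"
proof -
  obtain d0 where lim: "((\<lambda>t. (F (\<Phi> z + t *\<^sub>R u) - F (\<Phi> z)) / t) \<longlongrightarrow> d0) (at_right 0)"
    and cd: "clarke_dd F (\<Phi> z) u = ereal d0"
    using reg unfolding clarke_regular_at_def by blast
  define h where "h = (\<lambda>w. F (\<Phi> w) + q w)"
  define err where "err t = (F (\<Phi> (z + t *\<^sub>R v)) - F (\<Phi> z + t *\<^sub>R u)) / t + (q (z + t *\<^sub>R v) - q z) / t" for t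
  have hq: "cq h v (z, t) = (F (\<Phi> z + t *\<^sub>R u) - F (\<Phi> z)) / t + err t" for t
    unfolding cq_def err_def h_def fst_conv snd_conv
    by (simp add: add_divide_distrib[symmetric] diff_divide_distrib[symmetric])
  have err0: "(err \<longlongrightarrow> 0) (at_right 0)"
    unfolding tendsto_iff
  proof (intro allI impI)
    fix e :: real assume e: "e > 0"
    define e1 where "e1 = e / (2 * (M + 1))"
    have e1: "e1 > 0" using e M by (simp add: e1_def)
    obtain d1 where d1: "d1 > 0" "\<And>t. 0 < t \<Longrightarrow> t < d1 \<Longrightarrow>
                    norm (\<Phi> (z + t *\<^sub>R v) - \<Phi> z - t *\<^sub>R u) \<le> e1 * t"
      using line[OF e1] by blast
    obtain d2 where d2: "d2 > 0" "\<And>t. 0 < t \<Longrightarrow> t < d2 \<Longrightarrow>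
                    \<bar>q (z + t *\<^sub>R v) - q z\<bar> \<le> e1 * t"
      using ql[OF e1] by blast
    have ev: "eventually (\<lambda>t. 0 < t \<and> t < min d1 d2) (at_right (0::real))"
      unfolding eventually_at_right_field using d1 d2 by (intro exI[of _ "min d1 d2"]) auto
    show "eventually (\<lambda>t. dist (err t) 0 < e) (at_right 0)"
      using ev
    proof eventually_elim
      case (elim t)
      then have t: "0 < t" "t < d1" "t < d2" by auto
      have A: "\<bar>F (\<Phi> (z + t *\<^sub>R v)) - F (\<Phi> z + t *\<^sub>R u)\<bar> \<le> M * (e1 * t)"
      proof -
        have "\<bar>F (\<Phi> (z + t *\<^sub>R v)) - F (\<Phi> z + t *\<^sub>R u)\<bar> \<le> M * norm (\<Phi> (z + t *\<^sub>R v) - (\<Phi> z + t *\<^sub>R u))"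
          using lipschitz_onD[OF Lip, of "\<Phi> (z + t *\<^sub>R v)" "\<Phi> z + t *\<^sub>R u"] by (simp add: dist_norm dist_real_def)
        also have "\<dots> \<le> M * (e1 * t)"
        proof -
          have n: "norm (\<Phi> (z + t *\<^sub>R v) - (\<Phi> z + t *\<^sub>R u)) \<le> e1 * t"
            using d1(2)[OF t(1) t(2)] by (simp add: diff_diff_eq)
          show ?thesis by (rule mult_left_mono[OF n M])
        qed
        finally show ?thesis .
      qed
      have B: "\<bar>q (z + t *\<^sub>R v) - q z\<bar> \<le> e1 * t" using d2(2)[OF t(1) t(3)] .
      have "\<bar>(F (\<Phi> (z + t *\<^sub>R v)) - F (\<Phi> z + t *\<^sub>R u)) / t\<bar> \<le> M * e1"
        using A t(1) by (simp add: abs_div pos_divide_le_eq mult.assoc)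
      moreover have "\<bar>(q (z + t *\<^sub>R v) - q z) / t\<bar> \<le> e1"
        using B t(1) by (simp add: abs_div pos_divide_le_eq)
      moreover have "M * e1 + e1 < e"
      proof -
        have "M * e1 + e1 = (M + 1) * e1" by (simp add: algebra_simps)
        also have "\<dots> = e / 2" unfolding e1_def using M by (simp add: field_simps)
        finally show ?thesis using e by simp
      qed
      ultimately have "\<bar>err t\<bar> < e" unfolding err_def by linarith
      then show ?case by simp
    qed
  qed
  have hlim: "((\<lambda>t. cq h v (z, t)) \<longlongrightarrow> d0) (at_right 0)"
    unfolding hq using tendsto_add[OF lim err0] by simp
  have LS: "Limsup (at_right (0::real)) (\<lambda>t. ereal (cq h v (z, t))) = ereal d0"
    by (rule lim_imp_Limsup) (use hlim in \<open>auto intro: tendsto_ereal\<close>)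
  have fl: "filterlim (\<lambda>t. (z, t)) (nhds z \<times>\<^sub>F at_right (0::real)) (at_right (0::real))"
    by (rule filterlim_Pair) (auto intro: filterlim_ident)
  have "Limsup (at_right (0::real)) (\<lambda>t. ereal (cq h v (z, t))) \<le> clarke_dd h z v"
  proof (rule Limsup_le_by_real)
    fix r assume "clarke_dd h z v < ereal r"
    then have "eventually (\<lambda>x. ereal (cq h v x) < ereal r) (nhds z \<times>\<^sub>F at_right 0)"
      unfolding clarke_dd_cq by (rule Limsup_lessD)
    from fl[unfolded filterlim_iff, rule_format, OF this]
    show "eventually (\<lambda>t. ereal (cq h v (z, t)) < ereal r) (at_right 0)" .
  qed
  then show ?thesis using LS cd unfolding h_def by simp
qed




lemma linear_inner_rep:
  fixes D :: "'a::euclidean_space \<Rightarrow> real"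
  assumes "linear D"
  shows "D h = (\<Sum>b\<in>Basis. D b *\<^sub>R b) \<bullet> h"
proof -
  have "D h = D (\<Sum>b\<in>Basis. (h \<bullet> b) *\<^sub>R b)" by (simp add: euclidean_representation)
  also have "\<dots> = (\<Sum>b\<in>Basis. D b * (b \<bullet> h))"
    by (simp add: linear_sum[OF assms] linear_scale[OF assms] inner_commute[of h] mult.commute)
  also have "\<dots> = (\<Sum>b\<in>Basis. D b *\<^sub>R b) \<bullet> h"
    by (simp add: inner_sum_left)
  finally show ?thesis .
qed

lemma grad_works:
  fixes g :: "'a::euclidean_space \<Rightarrow> real"
  assumes "g differentiable (at z)"
  shows "(g has_derivative (\<lambda>h. grad g z \<bullet> h)) (at z)"
proof -
  obtain D where D: "(g has_derivative D) (at z)" using assms unfolding differentiable_def by blast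
  have lin: "linear D" using D has_derivative_linear by blast
  have "D = (\<lambda>h. (\<Sum>b\<in>Basis. D b *\<^sub>R b) \<bullet> h)" using linear_inner_rep[OF lin] by blast
  then have "\<exists>v. (g has_derivative (\<lambda>h. v \<bullet> h)) (at z)" using D by metis
  then show ?thesis unfolding grad_def by (rule someI_ex)
qed

lemma hess_works:
  fixes g :: "'a::euclidean_space \<Rightarrow> real"
  assumes "grad g differentiable (at z)"
  shows "(grad g has_derivative hess g z) (at z)"
  using assms unfolding hess_def differentiable_def by (rule someI_ex)

lemma dir_deriv:
  fixes g :: "'a::euclidean_space \<Rightarrow> real"
  assumes gd: "\<And>u. g differentiable (at u)"
  shows "((\<lambda>\<tau>. g (c + \<tau> *\<^sub>R b)) has_real_derivative (grad g (c + \<tau> *\<^sub>R b) \<bullet> b)) (at \<tau>)"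
proof -
  have 1: "((\<lambda>\<tau>. c + \<tau> *\<^sub>R b) has_derivative (\<lambda>t. t *\<^sub>R b)) (at \<tau>)"
    by (auto intro!: derivative_eq_intros)
  have 2: "(g has_derivative (\<lambda>h. grad g (c + \<tau> *\<^sub>R b) \<bullet> h)) (at (c + \<tau> *\<^sub>R b))"
    by (rule grad_works[OF gd])
  have "((g \<circ> (\<lambda>\<tau>. c + \<tau> *\<^sub>R b)) has_derivative ((\<lambda>h. grad g (c + \<tau> *\<^sub>R b) \<bullet> h) \<circ> (\<lambda>t. t *\<^sub>R b))) (at \<tau>)"
    using diff_chain_at[OF 1 2] .
  moreover have "((\<lambda>h. grad g (c + \<tau> *\<^sub>R b) \<bullet> h) \<circ> (\<lambda>t. t *\<^sub>R b)) = (*) (grad g (c + \<tau> *\<^sub>R b) \<bullet> b)"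
    by (auto simp: fun_eq_iff)
  ultimately show ?thesis unfolding has_field_derivative_def o_def by simp
qed

lemma sym_est:
  fixes g :: "'a::euclidean_space \<Rightarrow> real"
  assumes gd: "\<And>u. g differentiable (at u)"
    and lin: "linear D"
    and near: "\<And>y. norm (y - z) < d \<Longrightarrow> norm (grad g y - grad g z - D (y - z)) \<le> e * norm (y - z)"
    and s: "s > 0" "s * (norm a + norm b) < d" and e: "e \<ge> 0"
  shows "\<bar>g (z + s *\<^sub>R a + s *\<^sub>R b) - g (z + s *\<^sub>R a) - g (z + s *\<^sub>R b) + g z - s\<^sup>2 * (D a \<bullet> b)\<bar>
          \<le> s\<^sup>2 * (2 * e * (norm a + norm b) * norm b)"
proof -
  define \<psi> where "\<psi> \<tau> = g ((z + s *\<^sub>R a) + \<tau> *\<^sub>R b) - g (z + \<tau> *\<^sub>R b)" for \<tau>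
  define \<psi>' where "\<psi>' \<tau> = grad g ((z + s *\<^sub>R a) + \<tau> *\<^sub>R b) \<bullet> b - grad g (z + \<tau> *\<^sub>R b) \<bullet> b" for \<tau>
  have der: "DERIV \<psi> \<tau> :> \<psi>' \<tau>" for \<tau>
    unfolding \<psi>_def \<psi>'_def by (intro DERIV_diff dir_deriv gd)
  obtain \<theta> where th: "0 < \<theta>" "\<theta> < s" "\<psi> s - \<psi> 0 = (s - 0) * \<psi>' \<theta>"
    using MVT2[OF s(1) der] by blast
  have \<Delta>: "g (z + s *\<^sub>R a + s *\<^sub>R b) - g (z + s *\<^sub>R a) - g (z + s *\<^sub>R b) + g z = s * \<psi>' \<theta>"
    using th(3) unfolding \<psi>_def by simp
  define w1 where "w1 = s *\<^sub>R a + \<theta> *\<^sub>R b"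
  define w2 where "w2 = \<theta> *\<^sub>R b"
  have nw1: "norm w1 \<le> s * (norm a + norm b)"
  proof -
    have "norm w1 \<le> s * norm a + \<theta> * norm b" unfolding w1_def
      using norm_triangle_ineq[of "s *\<^sub>R a" "\<theta> *\<^sub>R b"] s th by simp
    also have "\<dots> \<le> s * norm a + s * norm b" using th by (intro add_left_mono mult_right_mono) auto
    finally show ?thesis by (simp add: algebra_simps)
  qed
  have nw2: "norm w2 \<le> s * norm b" unfolding w2_def using th by (simp add: mult_right_mono)
  have nw2': "norm w2 \<le> s * (norm a + norm b)" using nw2 s by (smt (verit) mult_left_mono norm_ge_zero)
  define r where "r w = grad g (z + w) - grad g z - D w" for w
  have r1: "norm (r w1) \<le> e * norm w1" unfolding r_def using near[of "z + w1"] nw1 s by simp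
  have r2: "norm (r w2) \<le> e * norm w2" unfolding r_def using near[of "z + w2"] nw2' s by simp
  define X where "X = grad g (z + w1) - grad g (z + w2) - D (s *\<^sub>R a)"
  have X: "X = r w1 - r w2"
    unfolding X_def r_def w1_def w2_def by (simp add: linear_add[OF lin] algebra_simps)
  have nX: "norm X \<le> 2 * e * s * (norm a + norm b)"
  proof -
    have "norm X \<le> norm (r w1) + norm (r w2)" unfolding X by (rule norm_triangle_ineq4)
    also have "\<dots> \<le> e * (s * (norm a + norm b)) + e * (s * (norm a + norm b))"
      using r1 r2 nw1 nw2' e by (smt (verit) mult_left_mono)
    finally show ?thesis by (simp add: algebra_simps)
  qed
  have "g (z + s *\<^sub>R a + s *\<^sub>R b) - g (z + s *\<^sub>R a) - g (z + s *\<^sub>R b) + g z - s\<^sup>2 * (D a \<bullet> b) = s * (X \<bullet> b)"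
    unfolding \<Delta> \<psi>'_def X_def w1_def w2_def
    by (simp add: linear_scale[OF lin] power2_eq_square inner_diff_left algebra_simps)
  also have "\<bar>\<dots>\<bar> \<le> s * (norm X * norm b)"
    using s Cauchy_Schwarz_ineq2[of X b] by (simp add: abs_mult)
  also have "\<dots> \<le> s * (2 * e * s * (norm a + norm b) * norm b)"
    using nX s by (intro mult_left_mono mult_right_mono) auto
  finally show ?thesis by (simp add: power2_eq_square algebra_simps)
qed

lemma hess_sym:
  fixes g :: "'a::euclidean_space \<Rightarrow> real"
  assumes gd: "\<And>u. g differentiable (at u)" and hd: "grad g differentiable (at z)"
  shows "hess g z a \<bullet> b = hess g z b \<bullet> a"
proof -
  define D where "D = hess g z"
  have hD: "(grad g has_derivative D) (at z)" unfolding D_def by (rule hess_works[OF hd])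
  have lin: "linear D" using hD has_derivative_linear by blast
  define C where "C = 2 * (norm a + norm b) * (norm a + norm b)"
  have key: "\<bar>D a \<bullet> b - D b \<bullet> a\<bar> \<le> e * C" if e: "e > 0" for e
  proof -
    obtain d where d: "d > 0" "\<And>y. norm (y - z) < d \<Longrightarrow> norm (grad g y - grad g z - D (y - z)) \<le> e * norm (y - z)"
      using hD e unfolding has_derivative_at_alt by blast
    define s where "s = d / (2 * (norm a + norm b + 1))"
    have den: "2 * (norm a + norm b + 1) > 0" by (smt (verit) norm_ge_zero)
    have s: "s > 0" using d den by (simp add: s_def)
    have "norm a + norm b < 2 * (norm a + norm b + 1)" by (smt (verit) norm_ge_zero)
    then have "s * (norm a + norm b) < s * (2 * (norm a + norm b + 1))" using s by simp
    also have "\<dots> = d" unfolding s_def using den by simp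
    finally have sd: "s * (norm a + norm b) < d" .
    have sd': "s * (norm b + norm a) < d" using sd by (simp add: add.commute)
    have 1: "\<bar>g (z + s *\<^sub>R a + s *\<^sub>R b) - g (z + s *\<^sub>R a) - g (z + s *\<^sub>R b) + g z - s\<^sup>2 * (D a \<bullet> b)\<bar>
          \<le> s\<^sup>2 * (2 * e * (norm a + norm b) * norm b)"
      using sym_est[OF gd lin d(2) s sd] e by simp
    have 2: "\<bar>g (z + s *\<^sub>R b + s *\<^sub>R a) - g (z + s *\<^sub>R b) - g (z + s *\<^sub>R a) + g z - s\<^sup>2 * (D b \<bullet> a)\<bar>
          \<le> s\<^sup>2 * (2 * e * (norm b + norm a) * norm a)"
      using sym_est[OF gd lin d(2) s sd'] e by simp
    have eqz: "z + s *\<^sub>R b + s *\<^sub>R a = z + s *\<^sub>R a + s *\<^sub>R b" by (simp add: algebra_simps)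
    have "s\<^sup>2 * \<bar>D a \<bullet> b - D b \<bullet> a\<bar> \<le> s\<^sup>2 * (2 * e * (norm a + norm b) * norm b) + s\<^sup>2 * (2 * e * (norm b + norm a) * norm a)"
    proof -
      have "\<bar>s\<^sup>2 * (D a \<bullet> b) - s\<^sup>2 * (D b \<bullet> a)\<bar> \<le> s\<^sup>2 * (2 * e * (norm a + norm b) * norm b) + s\<^sup>2 * (2 * e * (norm b + norm a) * norm a)"
        using 1 2 unfolding eqz by linarith
      moreover have "\<bar>s\<^sup>2 * (D a \<bullet> b) - s\<^sup>2 * (D b \<bullet> a)\<bar> = s\<^sup>2 * \<bar>D a \<bullet> b - D b \<bullet> a\<bar>"
        by (simp add: right_diff_distrib[symmetric] abs_mult)
      ultimately show ?thesis by simp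
    qed
    also have "\<dots> = s\<^sup>2 * (e * C)" unfolding C_def by (simp add: algebra_simps)
    finally show ?thesis using s by simp
  qed
  have "D a \<bullet> b - D b \<bullet> a = 0"
  proof (rule ccontr)
    assume ne: "D a \<bullet> b - D b \<bullet> a \<noteq> 0"
    define e where "e = \<bar>D a \<bullet> b - D b \<bullet> a\<bar> / (2 * (C + 1))"
    have C0: "C \<ge> 0" unfolding C_def by simp
    have e: "e > 0" using ne C0 by (simp add: e_def)
    have "e * C < \<bar>D a \<bullet> b - D b \<bullet> a\<bar>"
    proof -
      have "e * C \<le> e * (C + 1)" using e by simp
      also have "\<dots> = \<bar>D a \<bullet> b - D b \<bullet> a\<bar> / 2" unfolding e_def using C0 by (simp add: field_simps)
      also have "\<dots> < \<bar>D a \<bullet> b - D b \<bullet> a\<bar>" using ne by simp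
      finally show ?thesis .
    qed
    with key[OF e] show False by simp
  qed
  then show ?thesis unfolding D_def by simp
qed



locale bsetting =
  fixes g :: "(real^'n) \<times> (real^'p) \<Rightarrow> real" and \<mu> Lg Qg :: real
  assumes mu: "\<mu> > 0" and Lg: "Lg > 0" and Qg: "Qg > 0"
    and g_diff: "\<And>z. g differentiable (at z)"
    and g_twice: "\<And>z. grad g differentiable (at z)"
    and g_strong: "\<And>z v. v \<bullet> (hess_yy g z *v v) \<ge> \<mu> * (norm v)\<^sup>2"
    and grad_lip: "Lg-lipschitz_on UNIV (grad g)"
    and hyy_lip: "\<And>z w. onorm (\<lambda>v. (hess_yy g z - hess_yy g w) *v v) \<le> Qg * dist z w"
    and hxy_lip: "\<And>z w. onorm (\<lambda>v. (hess_xy g z - hess_xy g w) *v v) \<le> Qg * dist z w"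
begin

lemma hess_der: "(grad g has_derivative hess g z) (at z)"
  by (rule hess_works[OF g_twice])

lemma hess_bl: "bounded_linear (hess g z)"
  using hess_der has_derivative_bounded_linear by blast

lemma hess_lin: "linear (hess g z)"
  using hess_bl bounded_linear.linear by blast

lemma lin_y: "linear (\<lambda>b. snd (hess g z (0, b)))"
proof -
  have "bounded_linear (\<lambda>b::real^'p. ((0::real^'n), b))"
    by (rule bounded_linear_Pair[OF bounded_linear_zero bounded_linear_ident])
  then have "bounded_linear (\<lambda>b::real^'p. snd (hess g z (0, b)))"
    using bounded_linear_compose[OF bounded_linear_snd bounded_linear_compose[OF hess_bl]] by blast
  then show ?thesis using bounded_linear.linear by blast
qed

lemma lin_x: "linear (\<lambda>a. snd (hess g z (a, 0)))"
proof -
  have "bounded_linear (\<lambda>a::real^'n. (a, (0::real^'p)))"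
    by (rule bounded_linear_Pair[OF bounded_linear_ident bounded_linear_zero])
  then have "bounded_linear (\<lambda>a::real^'n. snd (hess g z (a, 0)))"
    using bounded_linear_compose[OF bounded_linear_snd bounded_linear_compose[OF hess_bl]] by blast
  then show ?thesis using bounded_linear.linear by blast
qed

lemma H_apply: "hess_yy g z *v b = snd (hess g z (0, b))"
proof -
  have "hess_yy g z = matrix (\<lambda>b. snd (hess g z (0, b)))"
    unfolding hess_yy_def matrix_def ..
  then show ?thesis using matrix_vector_mul(2)[OF lin_y, of z] by (metis)
qed

lemma B_apply: "a v* hess_xy g z = snd (hess g z (a, 0))"
proof -
  have "transpose (hess_xy g z) = matrix (\<lambda>a. snd (hess g z (a, 0)))"
    unfolding hess_xy_def matrix_def transpose_def by simp
  then have "transpose (hess_xy g z) *v a = snd (hess g z (a, 0))"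
    using matrix_vector_mul(2)[OF lin_x, of z] by (metis)
  then show ?thesis by simp
qed

lemma B_inner: "(hess_xy g z *v y) \<bullet> a = snd (hess g z (a, 0)) \<bullet> y"
  using dot_lmul_matrix[of a "hess_xy g z" y] B_apply[of a z] by (simp add: inner_commute)

lemma hess_split: "snd (hess g z (a, b)) = snd (hess g z (a, 0)) + hess_yy g z *v b"
proof -
  have "hess g z (a, b) = hess g z (a, 0) + hess g z (0, b)"
    using linear_add[OF hess_lin, of z "(a, 0)" "(0, b)"] by simp
  then show ?thesis by (simp add: H_apply)
qed

lemma H_sym: "(hess_yy g z *v x) \<bullet> y = x \<bullet> (hess_yy g z *v y)"
proof -
  have "(hess_yy g z *v x) \<bullet> y = hess g z (0, x) \<bullet> (0, y)" by (simp add: H_apply inner_Pair_0)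
  also have "\<dots> = hess g z (0, y) \<bullet> (0, x)" by (rule hess_sym[OF g_diff g_twice])
  also have "\<dots> = snd (hess g z (0, y)) \<bullet> x" by (simp add: inner_Pair_0)
  also have "\<dots> = x \<bullet> (hess_yy g z *v y)" by (simp add: H_apply inner_commute)
  finally show ?thesis .
qed

lemma H_lower: "\<mu> * norm v \<le> norm (hess_yy g z *v v)"
proof (cases "v = 0")
  case True then show ?thesis by simp
next
  case False
  have "\<mu> * (norm v)\<^sup>2 \<le> v \<bullet> (hess_yy g z *v v)" by (rule g_strong)
  also have "\<dots> \<le> norm v * norm (hess_yy g z *v v)" by (rule norm_cauchy_schwarz)
  finally have "norm v * (\<mu> * norm v) \<le> norm v * norm (hess_yy g z *v v)"
    by (simp add: power2_eq_square mult_ac)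
  then show ?thesis using False by simp
qed

lemma H_inv: "hess_yy g z ** matrix_inv (hess_yy g z) = mat 1 \<and> matrix_inv (hess_yy g z) ** hess_yy g z = mat 1"
proof -
  have "\<forall>x. hess_yy g z *v x = 0 \<longrightarrow> x = 0"
  proof (intro allI impI)
    fix x assume "hess_yy g z *v x = 0"
    then have "\<mu> * norm x \<le> 0" using H_lower[of x z] by simp
    then show "x = 0" using mu by (simp add: mult_le_0_iff)
  qed
  then obtain B where B: "B ** hess_yy g z = mat 1" using matrix_left_invertible_ker by blast
  then have "hess_yy g z ** B = mat 1" using matrix_left_right_inverse by blast
  with B have "\<exists>A'. hess_yy g z ** A' = mat 1 \<and> A' ** hess_yy g z = mat 1" by blast
  then show ?thesis unfolding matrix_inv_def by (rule someI_ex)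
qed

lemma Hi_apply1: "hess_yy g z *v (matrix_inv (hess_yy g z) *v v) = v"
  using H_inv by (simp add: matrix_vector_mul_assoc)

lemma Hi_apply2: "matrix_inv (hess_yy g z) *v (hess_yy g z *v v) = v"
  using H_inv by (simp add: matrix_vector_mul_assoc)

lemma Hi_bound: "norm (matrix_inv (hess_yy g z) *v v) \<le> norm v / \<mu>"
  using H_lower[of "matrix_inv (hess_yy g z) *v v" z] mu by (simp add: Hi_apply1 field_simps)

lemma Hi_sym: "(matrix_inv (hess_yy g z) *v x) \<bullet> y = x \<bullet> (matrix_inv (hess_yy g z) *v y)"
proof -
  let ?H = "hess_yy g z" and ?I = "matrix_inv (hess_yy g z)"
  have "(?I *v x) \<bullet> y = (?I *v x) \<bullet> (?H *v (?I *v y))" by (simp add: Hi_apply1)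
  also have "\<dots> = (?H *v (?I *v x)) \<bullet> (?I *v y)" by (simp add: H_sym)
  also have "\<dots> = x \<bullet> (?I *v y)" by (simp add: Hi_apply1)
  finally show ?thesis .
qed

lemma onorm_mat: "norm (M *v v) \<le> onorm (\<lambda>v. M *v v) * norm v" for M :: "real^'q^'r"
  using onorm[OF matrix_vector_mul_bounded_linear[of M]] by simp

lemma H_diff: "norm ((hess_yy g x - hess_yy g y) *v v) \<le> Qg * dist x y * norm v"
  using onorm_mat[of "hess_yy g x - hess_yy g y" v] hyy_lip[of x y]
  by (meson mult_right_mono norm_ge_zero order_trans)

lemma B_diff: "norm ((hess_xy g x - hess_xy g y) *v v) \<le> Qg * dist x y * norm v"
  using onorm_mat[of "hess_xy g x - hess_xy g y" v] hxy_lip[of x y]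
  by (meson mult_right_mono norm_ge_zero order_trans)

lemma Hi_diff: "norm (matrix_inv (hess_yy g x) *v c - matrix_inv (hess_yy g y) *v c) \<le> Qg * dist x y * norm c / \<mu>\<^sup>2"
proof -
  let ?Ix = "matrix_inv (hess_yy g x)" and ?Iy = "matrix_inv (hess_yy g y)"
  define u where "u = ?Iy *v c"
  have "?Ix *v c - ?Iy *v c = ?Ix *v (hess_yy g y *v u) - ?Ix *v (hess_yy g x *v u)"
    by (simp add: u_def Hi_apply1 Hi_apply2)
  also have "\<dots> = ?Ix *v ((hess_yy g y - hess_yy g x) *v u)"
    by (simp add: matrix_vector_mult_diff_distrib matrix_vector_mult_diff_rdistrib)
  finally have eq: "?Ix *v c - ?Iy *v c = ?Ix *v ((hess_yy g y - hess_yy g x) *v u)" .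
  have "norm (?Ix *v ((hess_yy g y - hess_yy g x) *v u)) \<le> norm ((hess_yy g y - hess_yy g x) *v u) / \<mu>"
    by (rule Hi_bound)
  also have "\<dots> \<le> Qg * dist y x * norm u / \<mu>"
    using H_diff[of y x u] mu by (simp add: divide_right_mono)
  also have "\<dots> \<le> Qg * dist y x * (norm c / \<mu>) / \<mu>"
    using Hi_bound[of y c] mu Qg unfolding u_def
    by (intro divide_right_mono mult_left_mono) auto
  also have "\<dots> = Qg * dist x y * norm c / \<mu>\<^sup>2" by (simp add: dist_commute power2_eq_square)
  finally show ?thesis unfolding eq .
qed

lemma G_lip: "norm (grad_y g x - grad_y g y) \<le> Lg * dist x y"
proof -
  have "norm (grad_y g x - grad_y g y) \<le> norm (grad g x - grad g y)"
    unfolding grad_y_def by (metis prod.collapse norm_snd_le snd_diff)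
  also have "\<dots> \<le> Lg * dist x y" using lipschitz_onD[OF grad_lip] by (simp add: dist_norm)
  finally show ?thesis .
qed


lemma Gp_diff_x: "norm (snd (hess g x (a, 0)) - snd (hess g z (a, 0))) \<le> Qg * dist x z * norm a"
proof -
  define D where "D = snd (hess g x (a, 0)) - snd (hess g z (a, 0))"
  have "D \<bullet> D = ((hess_xy g x - hess_xy g z) *v D) \<bullet> a"
    unfolding D_def by (simp add: B_inner inner_diff_left matrix_vector_mult_diff_rdistrib)
  also have "\<dots> \<le> norm ((hess_xy g x - hess_xy g z) *v D) * norm a" by (rule norm_cauchy_schwarz)
  also have "\<dots> \<le> (Qg * dist x z * norm D) * norm a" by (rule mult_right_mono[OF B_diff norm_ge_zero])
  finally have "norm D * norm D \<le> norm D * (Qg * dist x z * norm a)"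
    by (simp add: dot_square_norm power2_eq_square mult_ac)
  then show ?thesis unfolding D_def[symmetric]
    using Qg by (cases "norm D = 0") (auto simp: mult_le_cancel_left)
qed

lemma Gp_diff: "norm (snd (hess g x h) - snd (hess g z h)) \<le> (2 * Qg * dist x z) * norm h"
proof -
  obtain a b where h: "h = (a, b)" by (cases h)
  have "snd (hess g x h) - snd (hess g z h) = (snd (hess g x (a, 0)) - snd (hess g z (a, 0))) + (hess_yy g x - hess_yy g z) *v b"
    unfolding h by (simp add: hess_split[of x a b] hess_split[of z a b] matrix_vector_mult_diff_rdistrib)
  then have "norm (snd (hess g x h) - snd (hess g z h)) \<le> Qg * dist x z * norm a + Qg * dist x z * norm b"
    using norm_triangle_le[OF add_mono[OF Gp_diff_x[of x a z] H_diff[of x z b]]] by simp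
  also have "\<dots> \<le> Qg * dist x z * norm h + Qg * dist x z * norm h"
    using Qg unfolding h by (intro add_mono mult_left_mono) (auto simp: norm_fst_le norm_snd_le)
  finally show ?thesis by (simp add: mult_ac)
qed

lemma G_der: "(grad_y g has_derivative (\<lambda>h. snd (hess g x h))) (at x)"
proof -
  have "grad_y g = (\<lambda>z. snd (grad g z))" by (simp add: fun_eq_iff grad_y_def)
  then show ?thesis using has_derivative_snd[OF hess_der[of x]] by simp
qed

lemma G_strict:
  assumes e: "e > 0"
  shows "\<exists>d>0. \<forall>x y. dist x z0 < d \<longrightarrow> dist y z0 < d \<longrightarrow>
           norm (grad_y g y - grad_y g x - snd (hess g z0 (y - x))) \<le> e * norm (y - x)"
proof (intro exI[of _ "e / (2 * Qg)"] conjI allI impI)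
  show "e / (2 * Qg) > 0" using e Qg by simp
  fix x y assume x: "dist x z0 < e / (2 * Qg)" and y: "dist y z0 < e / (2 * Qg)"
  let ?S = "ball z0 (e / (2 * Qg))"
  have seg: "x + t *\<^sub>R (y - x) \<in> ?S" if "t \<in> {0..1}" for t
  proof -
    have "(1 - t) *\<^sub>R x + t *\<^sub>R y \<in> ?S"
      using that x y by (intro convexD[OF convex_ball]) (auto simp: dist_commute)
    moreover have "(1 - t) *\<^sub>R x + t *\<^sub>R y = x + t *\<^sub>R (y - x)" by (simp add: algebra_simps)
    ultimately show ?thesis by simp
  qed
  have der: "(grad_y g has_derivative (\<lambda>h. snd (hess g u h))) (at u within ?S)" if "u \<in> ?S" for u
    using G_der has_derivative_at_withinI by blast
  have B: "onorm ((\<lambda>h. snd (hess g u h)) - (\<lambda>h. snd (hess g z0 h))) \<le> e" if "u \<in> ?S" for u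
  proof -
    have "onorm ((\<lambda>h. snd (hess g u h)) - (\<lambda>h. snd (hess g z0 h))) \<le> 2 * Qg * dist u z0"
      by (rule onorm_le) (use Gp_diff in \<open>simp add: fun_diff_def\<close>)
    also have "\<dots> \<le> 2 * Qg * (e / (2 * Qg))"
      using that Qg by (intro mult_left_mono) (auto simp: dist_commute less_imp_le)
    also have "\<dots> = e" using Qg by simp
    finally show ?thesis .
  qed
  have "z0 \<in> ?S" using e Qg by simp
  from differentiable_bound_linearization[of x y ?S "grad_y g" "\<lambda>u h. snd (hess g u h)" z0 e, OF seg der B this]
  show "norm (grad_y g y - grad_y g x - snd (hess g z0 (y - x))) \<le> e * norm (y - x)"
    by (simp add: mult.commute)
qed


lemma A_identity:
  fixes w v z0 :: "(real^'n) \<times> (real^'p)" and t :: real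
  defines "w' \<equiv> w + t *\<^sub>R v"
  defines "P \<equiv> snd (hess g z0 (fst v, 0))"
  defines "r1 \<equiv> grad_y g w' - grad_y g w - snd (hess g z0 (w' - w))"
  shows "A_map g w' - A_map g w - t *\<^sub>R (- (matrix_inv (hess_yy g z0) *v P)) =
     t *\<^sub>R (matrix_inv (hess_yy g w') *v ((hess_yy g w' - hess_yy g z0) *v snd v))
   + t *\<^sub>R (matrix_inv (hess_yy g z0) *v P - matrix_inv (hess_yy g w') *v P)
   - matrix_inv (hess_yy g w') *v r1
   - (matrix_inv (hess_yy g w') *v grad_y g w - matrix_inv (hess_yy g w) *v grad_y g w)"
proof -
  have S: "snd (hess g z0 (w' - w)) = t *\<^sub>R P + t *\<^sub>R (hess_yy g z0 *v snd v)"
  proof -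
    have "w' - w = t *\<^sub>R v" unfolding w'_def by simp
    then have "hess g z0 (w' - w) = t *\<^sub>R hess g z0 v" using linear_scale[OF hess_lin] by simp
    moreover have "snd (hess g z0 v) = P + hess_yy g z0 *v snd v"
      unfolding P_def using hess_split[of z0 "fst v" "snd v"] by simp
    ultimately show ?thesis by (simp add: scaleR_add_right)
  qed
  have Gw': "grad_y g w' = grad_y g w + (t *\<^sub>R P + t *\<^sub>R (hess_yy g z0 *v snd v)) + r1"
    unfolding r1_def S[symmetric] by simp
  have key: "matrix_inv (hess_yy g w') *v (hess_yy g w' *v snd v) = snd v" by (rule Hi_apply2)
  have sw: "snd w' = snd w + t *\<^sub>R snd v" unfolding w'_def by simp
  show ?thesis
    unfolding A_map_def Gw' sw
    by (simp add: algebra_simps key)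
qed


lemma norm4: "norm (a + b - c - d) \<le> norm a + norm b + norm c + norm d" for a b c d :: "'z::real_normed_vector"
proof -
  have "norm (a + b - c - d) \<le> norm (a + b - c) + norm d" by (rule norm_triangle_ineq4)
  moreover have "norm (a + b - c) \<le> norm (a + b) + norm c" by (rule norm_triangle_ineq4)
  moreover have "norm (a + b) \<le> norm a + norm b" by (rule norm_triangle_ineq)
  ultimately show ?thesis by linarith
qed

lemma A_strict:
  assumes z0: "grad_y g z0 = 0" and e: "e > 0"
  shows "\<exists>d>0. \<forall>w t. dist w z0 < d \<longrightarrow> 0 < t \<longrightarrow> t < d \<longrightarrow>
     norm (A_map g (w + t *\<^sub>R v) - A_map g w - t *\<^sub>R (- (matrix_inv (hess_yy g z0) *v snd (hess g z0 (fst v, 0))))) \<le> e * t"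
proof -
  define V where "V = norm v"
  define P where "P = snd (hess g z0 (fst v, 0))"
  have V0: "V \<ge> 0" unfolding V_def by simp
  have nsv: "norm (snd v) \<le> V" unfolding V_def by (metis norm_snd_le prod.collapse)
  define e1 where "e1 = e * \<mu> / (2 * (V + 1))"
  have e1: "e1 > 0" using e mu V0 by (simp add: e1_def)
  obtain ds where ds: "ds > 0" "\<And>x y. dist x z0 < ds \<Longrightarrow> dist y z0 < ds \<Longrightarrow>
           norm (grad_y g y - grad_y g x - snd (hess g z0 (y - x))) \<le> e1 * norm (y - x)"
    using G_strict[OF e1, of z0] by blast
  define C0 where "C0 = (Qg / \<mu> * V + Qg / \<mu>\<^sup>2 * norm P) * (1 + V) + Qg * Lg * V / \<mu>\<^sup>2"
  have C0: "C0 \<ge> 0" unfolding C0_def using Qg mu Lg V0 by simp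
  define d where "d = min (ds / (1 + V)) (e / (2 * (C0 + 1)))"
  have d: "d > 0" unfolding d_def using ds e C0 V0 by simp
  show ?thesis
  proof (intro exI[of _ d] conjI allI impI d)
    fix w t assume w: "dist w z0 < d" and t: "0 < t" "t < d"
    define w' where "w' = w + t *\<^sub>R v"
    define r1 where "r1 = grad_y g w' - grad_y g w - snd (hess g z0 (w' - w))"
    let ?I = "\<lambda>x. matrix_inv (hess_yy g x)"
    have dw'w: "dist w' w = t * V" unfolding w'_def V_def dist_norm using t by simp
    have dw': "dist w' z0 < d * (1 + V)"
    proof -
      have "dist w' z0 \<le> dist w' w + dist w z0" by (rule dist_triangle)
      also have "\<dots> < d * V + d" using dw'w w t V0 by (smt (verit) mult_right_mono)
      finally show ?thesis by (simp add: algebra_simps)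
    qed
    have d1V: "d * (1 + V) \<le> ds"
    proof -
      have "d \<le> ds / (1 + V)" unfolding d_def by simp
      then show ?thesis using V0 by (simp add: pos_le_divide_eq)
    qed
    have dle: "d \<le> ds"
    proof -
      have "d \<le> d * (1 + V)" using d V0 by simp
      then show ?thesis using d1V by simp
    qed
    have r1: "norm r1 \<le> e1 * (t * V)"
      unfolding r1_def using ds(2)[of w w'] w dw' d1V dle dw'w by (simp add: dist_norm)
    have E1: "norm (t *\<^sub>R (?I w' *v ((hess_yy g w' - hess_yy g z0) *v snd v))) \<le> t * (Qg * (d * (1 + V)) * V / \<mu>)"
    proof -
      have "norm (?I w' *v ((hess_yy g w' - hess_yy g z0) *v snd v)) \<le> norm ((hess_yy g w' - hess_yy g z0) *v snd v) / \<mu>"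
        by (rule Hi_bound)
      also have "\<dots> \<le> Qg * dist w' z0 * norm (snd v) / \<mu>" using H_diff mu by (simp add: divide_right_mono)
      also have "\<dots> \<le> Qg * (d * (1 + V)) * V / \<mu>"
        using mu Qg dw' nsv d V0
        by (intro divide_right_mono mult_mono) auto
      finally have n: "norm (?I w' *v ((hess_yy g w' - hess_yy g z0) *v snd v)) \<le> Qg * (d * (1 + V)) * V / \<mu>" .
      show ?thesis using mult_left_mono[OF n, of t] t by (simp only: norm_scaleR abs_of_pos[OF t(1)])
    qed
    have E2: "norm (t *\<^sub>R (?I z0 *v P - ?I w' *v P)) \<le> t * (Qg * (d * (1 + V)) * norm P / \<mu>\<^sup>2)"
    proof -
      have "norm (?I z0 *v P - ?I w' *v P) \<le> Qg * dist z0 w' * norm P / \<mu>\<^sup>2" by (rule Hi_diff)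
      also have "\<dots> \<le> Qg * (d * (1 + V)) * norm P / \<mu>\<^sup>2"
        using mu Qg dw' by (intro divide_right_mono mult_right_mono mult_left_mono) (auto simp: dist_commute)
      finally have n: "norm (?I z0 *v P - ?I w' *v P) \<le> Qg * (d * (1 + V)) * norm P / \<mu>\<^sup>2" .
      show ?thesis using mult_left_mono[OF n, of t] t by (simp only: norm_scaleR abs_of_pos[OF t(1)])
    qed
    have E3: "norm (?I w' *v r1) \<le> t * (e1 * V / \<mu>)"
    proof -
      have "norm (?I w' *v r1) \<le> norm r1 / \<mu>" by (rule Hi_bound)
      also have "\<dots> \<le> e1 * (t * V) / \<mu>" using r1 mu by (simp add: divide_right_mono)
      finally show ?thesis by (simp add: mult_ac)
    qed
    have E4: "norm (?I w' *v grad_y g w - ?I w *v grad_y g w) \<le> t * (Qg * Lg * V * d / \<mu>\<^sup>2)"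
    proof -
      have Gw: "norm (grad_y g w) \<le> Lg * d"
      proof -
        have "norm (grad_y g w) = norm (grad_y g w - grad_y g z0)" using z0 by simp
        also have "\<dots> \<le> Lg * dist w z0" by (rule G_lip)
        also have "\<dots> \<le> Lg * d" using w Lg by simp
        finally show ?thesis .
      qed
      have "norm (?I w' *v grad_y g w - ?I w *v grad_y g w) \<le> Qg * dist w' w * norm (grad_y g w) / \<mu>\<^sup>2"
        by (rule Hi_diff)
      also have "\<dots> \<le> Qg * (t * V) * (Lg * d) / \<mu>\<^sup>2"
        using mu Qg Gw dw'w V0 t by (intro divide_right_mono mult_mono) auto
      finally show ?thesis by (simp add: mult_ac)
    qed
    have sum: "Qg * (d * (1 + V)) * V / \<mu> + Qg * (d * (1 + V)) * norm P / \<mu>\<^sup>2 + e1 * V / \<mu> + Qg * Lg * V * d / \<mu>\<^sup>2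
               = d * C0 + e1 * V / \<mu>"
      unfolding C0_def by (simp add: algebra_simps)
    have dC0: "d * C0 \<le> e / 2"
    proof -
      have "d * C0 \<le> (e / (2 * (C0 + 1))) * C0" using C0 unfolding d_def by (intro mult_right_mono) auto
      also have "\<dots> \<le> (e / (2 * (C0 + 1))) * (C0 + 1)" using e C0 by (intro mult_left_mono) auto
      also have "\<dots> = e / 2" using C0 by (simp add: field_simps)
      finally show ?thesis .
    qed
    have e1V: "e1 * V / \<mu> \<le> e / 2"
    proof -
      have "e1 * V / \<mu> = e * V / (2 * (V + 1))" unfolding e1_def using mu by simp
      also have "\<dots> \<le> e * (V + 1) / (2 * (V + 1))" using e V0 by (intro divide_right_mono) auto
      also have "\<dots> = e / 2"
      proof -
        have "V + 1 \<noteq> 0" using V0 by simp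
        then show ?thesis by (simp add: field_simps)
      qed
      finally show ?thesis .
    qed
    have "norm (A_map g w' - A_map g w - t *\<^sub>R (- (?I z0 *v P)))
        \<le> norm (t *\<^sub>R (?I w' *v ((hess_yy g w' - hess_yy g z0) *v snd v)))
          + norm (t *\<^sub>R (?I z0 *v P - ?I w' *v P)) + norm (?I w' *v r1)
          + norm (?I w' *v grad_y g w - ?I w *v grad_y g w)"
      unfolding A_identity[of w t v z0, folded w'_def P_def] r1_def
      by (rule norm4)
    also have "\<dots> \<le> t * (Qg * (d * (1 + V)) * V / \<mu>) + t * (Qg * (d * (1 + V)) * norm P / \<mu>\<^sup>2)
           + t * (e1 * V / \<mu>) + t * (Qg * Lg * V * d / \<mu>\<^sup>2)"
      using E1 E2 E3 E4 by linarith
    also have "\<dots> = t * (d * C0 + e1 * V / \<mu>)" unfolding sum[symmetric] by (simp add: algebra_simps)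
    also have "\<dots> \<le> t * e"
    proof -
      have "d * C0 + e1 * V / \<mu> \<le> e" using dC0 e1V by linarith
      then show ?thesis using t by (intro mult_left_mono) auto
    qed
    finally show "norm (A_map g (w + t *\<^sub>R v) - A_map g w - t *\<^sub>R (- (matrix_inv (hess_yy g z0) *v snd (hess g z0 (fst v, 0))))) \<le> e * t"
      unfolding w'_def P_def by (simp add: mult.commute)
  qed
qed


lemma Phi_strict:
  assumes z0: "grad_y g z0 = 0" and e: "e > 0"
  shows "\<exists>d>0. \<forall>w t. dist w z0 < d \<longrightarrow> 0 < t \<longrightarrow> t < d \<longrightarrow>
     norm ((fst (w + t *\<^sub>R v), A_map g (w + t *\<^sub>R v)) - (fst w, A_map g w)
       - t *\<^sub>R (fst v, - (matrix_inv (hess_yy g z0) *v snd (hess g z0 (fst v, 0))))) \<le> e * t"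
proof -
  obtain d where d: "d > 0" "\<forall>w t. dist w z0 < d \<longrightarrow> 0 < t \<longrightarrow> t < d \<longrightarrow>
     norm (A_map g (w + t *\<^sub>R v) - A_map g w - t *\<^sub>R (- (matrix_inv (hess_yy g z0) *v snd (hess g z0 (fst v, 0))))) \<le> e * t"
    using A_strict[OF z0 e, of v] by blast
  show ?thesis
  proof (intro exI[of _ d] conjI allI impI d(1))
    fix w t assume "dist w z0 < d" "0 < t" "t < d"
    with d(2) have "norm (A_map g (w + t *\<^sub>R v) - A_map g w - t *\<^sub>R (- (matrix_inv (hess_yy g z0) *v snd (hess g z0 (fst v, 0))))) \<le> e * t"
      by blast
    then show "norm ((fst (w + t *\<^sub>R v), A_map g (w + t *\<^sub>R v)) - (fst w, A_map g w)
       - t *\<^sub>R (fst v, - (matrix_inv (hess_yy g z0) *v snd (hess g z0 (fst v, 0))))) \<le> e * t"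
      by (simp add: norm_prod_def)
  qed
qed

lemma sq_diff: "\<bar>(norm a)\<^sup>2 - (norm b)\<^sup>2\<bar> \<le> norm (a - b) * (norm a + norm b)" for a b :: "'z::real_normed_vector"
proof -
  have "(norm a)\<^sup>2 - (norm b)\<^sup>2 = (norm a - norm b) * (norm a + norm b)"
    by (simp add: power2_eq_square algebra_simps)
  then have "\<bar>(norm a)\<^sup>2 - (norm b)\<^sup>2\<bar> = \<bar>norm a - norm b\<bar> * \<bar>norm a + norm b\<bar>"
    by (simp only: abs_mult)
  also have "\<bar>norm a + norm b\<bar> = norm a + norm b" by simp
  finally have "\<bar>(norm a)\<^sup>2 - (norm b)\<^sup>2\<bar> = \<bar>norm a - norm b\<bar> * (norm a + norm b)" .
  also have "\<dots> \<le> norm (a - b) * (norm a + norm b)"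
    by (intro mult_right_mono norm_triangle_ineq3) auto
  finally show ?thesis .
qed

lemma q_strict:
  assumes z0: "grad_y g z0 = 0" and e: "e > 0" and beta: "\<beta> \<ge> 0"
  shows "\<exists>d>0. \<forall>w t. dist w z0 < d \<longrightarrow> 0 < t \<longrightarrow> t < d \<longrightarrow>
     \<bar>\<beta> / 2 * (norm (grad_y g (w + t *\<^sub>R v)))\<^sup>2 - \<beta> / 2 * (norm (grad_y g w))\<^sup>2\<bar> \<le> e * t"
proof -
  define V where "V = norm v"
  have V0: "V \<ge> 0" unfolding V_def by simp
  define K where "K = \<beta> / 2 * Lg * Lg * V * (2 + V)"
  have K0: "K \<ge> 0" unfolding K_def using beta Lg V0 by simp
  define d where "d = min 1 (e / (K + 1))"
  have d: "d > 0" "d \<le> 1" "d \<le> e / (K + 1)" unfolding d_def using e K0 by auto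
  show ?thesis
  proof (intro exI[of _ d] conjI allI impI d(1))
    fix w t assume w: "dist w z0 < d" and t: "0 < t" "t < d"
    define w' where "w' = w + t *\<^sub>R v"
    have a: "norm (grad_y g w' - grad_y g w) \<le> Lg * (t * V)"
      using G_lip[of w' w] t unfolding w'_def V_def by (simp add: dist_norm)
    have b: "norm (grad_y g w) \<le> Lg * d"
    proof -
      have "norm (grad_y g w) = norm (grad_y g w - grad_y g z0)" using z0 by simp
      also have "\<dots> \<le> Lg * dist w z0" by (rule G_lip)
      also have "\<dots> \<le> Lg * d" using w Lg by simp
      finally show ?thesis .
    qed
    have tV: "t * V \<le> d * V" using t V0 by (simp add: mult_right_mono)
    have c: "norm (grad_y g w') + norm (grad_y g w) \<le> Lg * d * (2 + V)"
    proof -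
      have "norm (grad_y g w') \<le> norm (grad_y g w' - grad_y g w) + norm (grad_y g w)"
        by (metis add.commute norm_triangle_sub)
      then have "norm (grad_y g w') + norm (grad_y g w) \<le> Lg * (t * V) + 2 * (Lg * d)" using a b by linarith
      also have "\<dots> \<le> Lg * (d * V) + 2 * (Lg * d)" using tV Lg by simp
      finally show ?thesis by (simp add: algebra_simps)
    qed
    have "\<bar>\<beta> / 2 * (norm (grad_y g w'))\<^sup>2 - \<beta> / 2 * (norm (grad_y g w))\<^sup>2\<bar>
        = \<beta> / 2 * \<bar>(norm (grad_y g w'))\<^sup>2 - (norm (grad_y g w))\<^sup>2\<bar>"
    proof -
      have "\<beta> / 2 * (norm (grad_y g w'))\<^sup>2 - \<beta> / 2 * (norm (grad_y g w))\<^sup>2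
          = \<beta> / 2 * ((norm (grad_y g w'))\<^sup>2 - (norm (grad_y g w))\<^sup>2)" by (simp only: right_diff_distrib)
      then show ?thesis using beta by (simp only: abs_mult)
    qed
    also have "\<dots> \<le> \<beta> / 2 * (norm (grad_y g w' - grad_y g w) * (norm (grad_y g w') + norm (grad_y g w)))"
      using beta by (intro mult_left_mono sq_diff) auto
    also have "\<dots> \<le> \<beta> / 2 * ((Lg * (t * V)) * (Lg * d * (2 + V)))"
      using beta a c Lg t V0 by (intro mult_left_mono mult_mono) auto
    also have "\<dots> = t * (K * d)" unfolding K_def by (simp add: algebra_simps)
    also have "\<dots> \<le> t * e"
    proof -
      have "K * d \<le> (K + 1) * (e / (K + 1))" using K0 d by (intro mult_mono) auto
      also have "\<dots> = e" using K0 by simp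
      finally show ?thesis using t by (intro mult_left_mono) auto
    qed
    finally show "\<bar>\<beta> / 2 * (norm (grad_y g (w + t *\<^sub>R v)))\<^sup>2 - \<beta> / 2 * (norm (grad_y g w))\<^sup>2\<bar> \<le> e * t"
      unfolding w'_def by (simp add: mult.commute)
  qed
qed

lemma Phi_cont:
  assumes z0: "grad_y g z0 = 0"
  shows "isCont (\<lambda>w. (fst w, A_map g w)) z0"
proof -
  have A0: "A_map g z0 = snd z0" unfolding A_map_def using z0 by simp
  have bound: "norm ((fst w, A_map g w) - (fst z0, A_map g z0)) \<le> (2 + Lg / \<mu>) * norm (w - z0)" for w
  proof -
    have "norm ((fst w, A_map g w) - (fst z0, A_map g z0)) \<le> norm (fst w - fst z0) + norm (A_map g w - A_map g z0)"
      by (simp add: norm_Pair_le)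
    also have "norm (fst w - fst z0) \<le> norm (w - z0)" by (metis fst_diff norm_fst_le prod.collapse)
    moreover have "norm (A_map g w - A_map g z0) \<le> norm (w - z0) + Lg / \<mu> * norm (w - z0)"
    proof -
      have "A_map g w - A_map g z0 = (snd w - snd z0) - matrix_inv (hess_yy g w) *v grad_y g w"
        unfolding A_map_def A0[unfolded A_map_def] using A0 by (simp add: A_map_def z0)
      then have "norm (A_map g w - A_map g z0) \<le> norm (snd w - snd z0) + norm (matrix_inv (hess_yy g w) *v grad_y g w)"
        by (simp add: norm_triangle_ineq4)
      also have "norm (snd w - snd z0) \<le> norm (w - z0)" by (metis snd_diff norm_snd_le prod.collapse)
      moreover have "norm (matrix_inv (hess_yy g w) *v grad_y g w) \<le> Lg / \<mu> * norm (w - z0)"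
      proof -
        have "norm (matrix_inv (hess_yy g w) *v grad_y g w) \<le> norm (grad_y g w) / \<mu>" by (rule Hi_bound)
        also have "norm (grad_y g w) \<le> Lg * norm (w - z0)" using G_lip[of w z0] z0 by (simp add: dist_norm)
        then have "norm (grad_y g w) / \<mu> \<le> Lg * norm (w - z0) / \<mu>" using mu by (simp add: divide_right_mono)
        finally show ?thesis by simp
      qed
      ultimately show ?thesis by linarith
    qed
    ultimately show ?thesis by (simp add: algebra_simps)
  qed
  have C: "2 + Lg / \<mu> > 0" using Lg mu by (simp add: add_pos_pos)
  show ?thesis
    unfolding isCont_def LIM_eq
  proof (intro allI impI)
    fix r :: real assume r: "r > 0"
    show "\<exists>s>0. \<forall>x. x \<noteq> z0 \<and> norm (x - z0) < s \<longrightarrow> norm ((fst x, A_map g x) - (fst z0, A_map g z0)) < r"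
    proof (intro exI[of _ "r / (2 + Lg / \<mu>)"] conjI allI impI)
      show "r / (2 + Lg / \<mu>) > 0" using r C by simp
      fix x assume "x \<noteq> z0 \<and> norm (x - z0) < r / (2 + Lg / \<mu>)"
      then have "(2 + Lg / \<mu>) * norm (x - z0) < r" using C by (simp add: pos_less_divide_eq mult.commute)
      then show "norm ((fst x, A_map g x) - (fst z0, A_map g z0)) < r" using bound[of x] by linarith
    qed
  qed
qed

end

theorem proposition3p2:
  fixes f g :: "(real^'n) \<times> (real^'p) \<Rightarrow> real"
    and Df :: "(real^'n) \<times> (real^'p) \<Rightarrow> ((real^'n) \<times> (real^'p)) set"
    and Mf \<mu> Lg Qg \<beta> :: real
  assumes consts_pos: "Mf > 0" "\<mu> > 0" "Lg > 0" "Qg > 0"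
    and f_lip: "Mf-lipschitz_on UNIV f"
    and g_diff: "\<And>z. g differentiable (at z)"
    and g_twice: "\<And>z. grad g differentiable (at z)"
    and g_strong: "\<And>z v. v \<bullet> (hess_yy g z *v v) \<ge> \<mu> * (norm v)\<^sup>2"
    and grad_lip: "Lg-lipschitz_on UNIV (grad g)"
    and hyy_lip: "\<And>z w. onorm (\<lambda>v. (hess_yy g z - hess_yy g w) *v v) \<le> Qg * dist z w"
    and hxy_lip: "\<And>z w. onorm (\<lambda>v. (hess_xy g z - hess_xy g w) *v v) \<le> Qg * dist z w"
    and hyy_C1: "\<exists>D. (\<forall>z. (hess_yy g has_derivative blinfun_apply (D z)) (at z))
                     \<and> continuous_on UNIV D"
    and Df_cons: "conservative_potential Df f"
    and Df_vals: "\<And>z. convex (Df z) \<and> (\<forall>v\<in>Df z. norm v \<le> Mf)"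
    and beta_pos: "\<beta> > 0"
  shows "(\<forall>z \<in> M_set g. CDB_stationary f g \<beta> z \<longrightarrow> BLO_stationary f g z)
       \<and> (clarke_regular f \<longrightarrow>
            (\<forall>z \<in> M_set g. BLO_stationary f g z \<longleftrightarrow> CDB_stationary f g \<beta> z))"
proof -
  interpret bsetting g \<mu> Lg Qg
    by unfold_locales (use consts_pos g_diff g_twice g_strong grad_lip hyy_lip hxy_lip in auto)
  have Mf0: "Mf \<ge> 0" using consts_pos by simp
  have main: "(CDB_stationary f g \<beta> z0 \<longrightarrow> BLO_stationary f g z0)
       \<and> (clarke_regular f \<longrightarrow> (BLO_stationary f g z0 \<longleftrightarrow> CDB_stationary f g \<beta> z0))"
    if z0M: "z0 \<in> M_set g" for z0
  proof -
    have z0: "grad_y g z0 = 0" using z0M unfolding M_set_def by simp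
    let ?Hi = "matrix_inv (hess_yy g z0)"
    define \<Phi> where "\<Phi> w = (fst w, A_map g w)" for w
    define q where "q w = \<beta> / 2 * (norm (grad_y g w))\<^sup>2" for w
    define Lv where "Lv (v::(real^'n) \<times> (real^'p)) = (fst v, - (?Hi *v snd (hess g z0 (fst v, 0))))" for v
    define K where "K d = fst d - hess_xy g z0 *v (?Hi *v snd d)" for d :: "(real^'n) \<times> (real^'p)"
    have hfun: "h_fun f g \<beta> = (\<lambda>w. f (\<Phi> w) + q w)"
      by (simp add: fun_eq_iff h_fun_def \<Phi>_def q_def)
    have Phiz0: "\<Phi> z0 = z0" unfolding \<Phi>_def A_map_def using z0 by simp
    have KL: "d \<bullet> Lv v = K d \<bullet> fst v" for d v
    proof -
      have "snd d \<bullet> (?Hi *v snd (hess g z0 (fst v, 0))) = (?Hi *v snd d) \<bullet> snd (hess g z0 (fst v, 0))"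
        by (simp add: Hi_sym)
      also have "\<dots> = snd (hess g z0 (fst v, 0)) \<bullet> (?Hi *v snd d)" by (rule inner_commute)
      also have "\<dots> = (hess_xy g z0 *v (?Hi *v snd d)) \<bullet> fst v" by (rule B_inner[symmetric])
      finally have "snd d \<bullet> (?Hi *v snd (hess g z0 (fst v, 0))) = (hess_xy g z0 *v (?Hi *v snd d)) \<bullet> fst v" .
      moreover have "d \<bullet> Lv v = fst d \<bullet> fst v - snd d \<bullet> (?Hi *v snd (hess g z0 (fst v, 0)))"
        unfolding Lv_def by (cases d) simp
      ultimately show ?thesis unfolding K_def by (simp add: inner_diff_left)
    qed
    have linL: "linear Lv"
    proof (rule linearI)
      fix x y show "Lv (x + y) = Lv x + Lv y"
        unfolding Lv_def by (simp add: linear_add[OF lin_x] matrix_vector_right_distrib)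
    next
      fix c :: real and x show "Lv (c *\<^sub>R x) = c *\<^sub>R Lv x"
        unfolding Lv_def by (simp add: linear_scale[OF lin_x] matrix_vector_mult_scaleR)
    qed
    have strict: "\<exists>d>0. \<forall>w t. dist w z0 < d \<longrightarrow> 0 < t \<longrightarrow> t < d \<longrightarrow>
                    norm (\<Phi> (w + t *\<^sub>R v) - \<Phi> w - t *\<^sub>R Lv v) \<le> e * t" if "e > 0" for e v
      using Phi_strict[OF z0 that, of v] unfolding \<Phi>_def Lv_def .
    have qs: "\<exists>d>0. \<forall>w t. dist w z0 < d \<longrightarrow> 0 < t \<longrightarrow> t < d \<longrightarrow>
                    \<bar>q (w + t *\<^sub>R v) - q w\<bar> \<le> e * t" if "e > 0" for e v
      using q_strict[OF z0 that, of \<beta> v] beta_pos unfolding q_def by simp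
    have cont: "isCont \<Phi> z0" unfolding \<Phi>_def by (rule Phi_cont[OF z0])
    have upper: "clarke_dd (h_fun f g \<beta>) z0 v \<le> clarke_dd f z0 (Lv v)" for v
      using clarke_chain_upper[OF f_lip Mf0 cont strict qs] unfolding hfun Phiz0 by simp
    have line: "\<exists>d>0. \<forall>t. 0 < t \<longrightarrow> t < d \<longrightarrow>
                    norm (\<Phi> (z0 + t *\<^sub>R v) - \<Phi> z0 - t *\<^sub>R Lv v) \<le> e * t" if "e > 0" for e v
      using strict[OF that, of v] by (metis dist_self)
    have ql: "\<exists>d>0. \<forall>t. 0 < t \<longrightarrow> t < d \<longrightarrow>
                    \<bar>q (z0 + t *\<^sub>R v) - q z0\<bar> \<le> e * t" if "e > 0" for e v
      using qs[OF that, of v] by (metis dist_self)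
    have lower: "clarke_dd f z0 (Lv v) \<le> clarke_dd (h_fun f g \<beta>) z0 v" if reg: "clarke_regular f" for v
    proof -
      have "clarke_regular_at f (\<Phi> z0)" using reg unfolding clarke_regular_def by blast
      from clarke_chain_lower[OF f_lip Mf0 this line ql]
      show ?thesis unfolding hfun Phiz0 by simp
    qed
    have dir1: "BLO_stationary f g z0" if cdb: "CDB_stationary f g \<beta> z0"
    proof -
      have "0 \<le> cdr f z0 (Lv u)" for u
      proof -
        have "ereal (0 \<bullet> u) \<le> clarke_dd (h_fun f g \<beta>) z0 u"
          using cdb unfolding CDB_stationary_def clarke_subdiff_def by blast
        also have "\<dots> \<le> clarke_dd f z0 (Lv u)" by (rule upper)
        also have "\<dots> = ereal (cdr f z0 (Lv u))" by (rule clarke_dd_real(1)[OF f_lip])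
        finally show ?thesis by simp
      qed
      from clarke_sep[OF f_lip linL this]
      obtain \<xi> where xi: "\<xi> \<in> clarke_subdiff f z0" "\<And>u. \<xi> \<bullet> Lv u = 0" by blast
      have "K \<xi> \<bullet> K \<xi> = 0" using xi(2)[of "(K \<xi>, 0)"] KL[of \<xi> "(K \<xi>, 0)"] by simp
      then have "K \<xi> = 0" by simp
      then show ?thesis unfolding BLO_stationary_def using xi(1) z0 unfolding K_def by blast
    qed
    have dir2: "CDB_stationary f g \<beta> z0" if reg: "clarke_regular f" and blo: "BLO_stationary f g z0"
    proof -
      obtain d where d: "d \<in> clarke_subdiff f z0" "K d = 0"
        using blo unfolding BLO_stationary_def K_def by blast
      have "ereal (0 \<bullet> v) \<le> clarke_dd (h_fun f g \<beta>) z0 v" for v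
      proof -
        have "ereal (0 \<bullet> v) = ereal (d \<bullet> Lv v)" using KL[of d v] d(2) by simp
        also have "\<dots> \<le> clarke_dd f z0 (Lv v)" using d(1) unfolding clarke_subdiff_def by blast
        also have "\<dots> \<le> clarke_dd (h_fun f g \<beta>) z0 v" by (rule lower[OF reg])
        finally show ?thesis .
      qed
      then show ?thesis unfolding CDB_stationary_def clarke_subdiff_def by blast
    qed
    show ?thesis using dir1 dir2 by blast
  qed
  show ?thesis using main by blast
qed


end
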